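(* Let $d\ge1$ be an integer and let $S_d:=\{\mathbf{x}\in\mathbb{R}^d: x_i\ge 0 \text{ for all } i,\ x_1+\cdots+x_d\le 1\}$. Let $\mathbf{p}_1,\ldots,\mathbf{p}_n$ be independent random points, each uniformly distributed in $S_d$, and let $Z_n$ be the number of dominating records of $\mathbf{p}_1,\ldots,\mathbf{p}_n$. Then \[ \mathbb{E}[Z_n]=\sum_{1\le k\le n}\frac{(d!)^k\,\Gamma(k)^d}{\Gamma(dk+1)}, \] \[ \mathbb{V}[Z_n]=2\sum_{2\le k\le n}\frac{(d!)^k\,\Gamma(k)^d}{\Gamma(dk+1)}H_{k-1}^{(d)}+\sum_{1\le k\le n}\frac{(d!)^k\,\Gamma(k)^d}{\Gamma(dk+1)}-\left(\sum_{1\le k\le n}\frac{(d!)^k\,\Gamma(k)^d}{\Gamma(dk+1)}\right)^2, \] where $H_m^{(a)}=\sum_{i=1}^m i^{-a}$. Moreover, if instead $\mathbf{p}_1,\ldots,\mathbf{p}_n$ are independent and uniformly distributed in the hypercube $[0,1]^d$, then the number $Z_n$ of dominating records satisfies $\mathbb{E}[Z_n]=H_n^{(d)}$ and $\mathbb{V}[Z_n]=H_n^{(d)}-H_n^{(2d)}$.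
   Context: For $\mathbf{p},\mathbf{q}\in\mathbb{R}^d$, $\mathbf{p}$ dominates $\mathbf{q}$ (written $\mathbf{q}\prec\mathbf{p}$) if every coordinate of $\mathbf{p}-\mathbf{q}$ is strictly positive. A point $\mathbf{p}_k$ is a dominating record of the sequence $\mathbf{p}_1,\ldots,\mathbf{p}_n$ if $\mathbf{p}_i\prec\mathbf{p}_k$ for all $1\le i<k$ (so $\mathbf{p}_1$ is always a dominating record). *)

theory Defs
  imports "HOL-Analysis.Analysis" "HOL-Probability.Probability"
begin

definition dominated_by :: "real^'d \<Rightarrow> real^'d \<Rightarrow> bool" where
  "dominated_by q p \<longleftrightarrow> (\<forall>i. q $ i < p $ i)"

definition std_simplex :: "(real^'d) set" where
  "std_simplex = {x. (\<forall>i. 0 \<le> x $ i) \<and> (\<Sum>i\<in>UNIV. x $ i) \<le> 1}"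

definition unit_cube :: "(real^'d) set" where
  "unit_cube = {x. \<forall>i. 0 \<le> x $ i \<and> x $ i \<le> 1}"

definition num_dom_records :: "nat \<Rightarrow> (nat \<Rightarrow> real^'d) \<Rightarrow> nat" where
  "num_dom_records n p = card {k \<in> {1..n}. \<forall>i\<in>{1..<k}. dominated_by (p i) (p k)}"

definition gen_harm :: "nat \<Rightarrow> nat \<Rightarrow> real" where
  "gen_harm a m = (\<Sum>i=1..m. 1 / real i ^ a)"

definition iid_uniform :: "nat \<Rightarrow> (real^'d) set \<Rightarrow> (nat \<Rightarrow> real^'d) measure" where
  "iid_uniform n S = PiM {1..n} (\<lambda>_. uniform_measure lborel S)"

definition rec_mean :: "(nat \<Rightarrow> real^'d) measure \<Rightarrow> nat \<Rightarrow> real" where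
  "rec_mean M n = (LINT p|M. real (num_dom_records n p))"

definition rec_var :: "(nat \<Rightarrow> real^'d) measure \<Rightarrow> nat \<Rightarrow> real" where
  "rec_var M n = (LINT p|M. (real (num_dom_records n p) - rec_mean M n)\<^sup>2)"

end

theory Submission
  imports Defs
begin


lemma sq_sum_01:
  fixes f :: "nat \<Rightarrow> real"
  assumes "\<And>k. f k * f k = f k"
  shows "(\<Sum>k=1..n. f k)\<^sup>2 = (\<Sum>k=1..n. f k) + 2 * (\<Sum>k=1..n. \<Sum>j=1..<k. f j * f k)"
proof (induction n)
  case 0 then show ?case by simp
next
  case (Suc n)
  have e: "(\<Sum>j=1..<Suc n. f j * f (Suc n)) = (\<Sum>k=1..n. f k) * f (Suc n)"
    by (simp add: sum_distrib_right atLeastLessThanSuc_atLeastAtMost)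
  show ?case
    using Suc assms[of "Suc n"] e by (simp add: power2_eq_square algebra_simps)
qed

locale recs = prob_space \<mu> for \<mu> :: "(real^'d) measure" +
  assumes sets_mu[measurable_cong]: "sets \<mu> = sets borel"
begin

lemma space_mu[simp]: "space \<mu> = UNIV"
  using sets_eq_imp_space_eq[OF sets_mu] by simp

lemma meas_mu_borel: "measurable N \<mu> = measurable N borel"
  by (rule measurable_cong_sets) (simp_all add: sets_mu)

sublocale PS: product_sigma_finite "\<lambda>_::nat. \<mu>"
  by unfold_locales

lemma PL:
  fixes g :: "real^'d \<Rightarrow> ennreal" and h :: "nat \<Rightarrow> real^'d \<Rightarrow> real^'d \<Rightarrow> ennreal"
  assumes I: "finite I" "k \<in> I"
    and g[measurable]: "g \<in> borel_measurable \<mu>"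
    and h[measurable]: "\<And>i. i \<in> I \<Longrightarrow> (\<lambda>(z,x). h i z x) \<in> borel_measurable (\<mu> \<Otimes>\<^sub>M \<mu>)"
  shows "(\<integral>\<^sup>+p. g (p k) * (\<Prod>i\<in>I-{k}. h i (p i) (p k)) \<partial>PiM I (\<lambda>_. \<mu>))
       = (\<integral>\<^sup>+x. g x * (\<Prod>i\<in>I-{k}. \<integral>\<^sup>+z. h i z x \<partial>\<mu>) \<partial>\<mu>)"
proof -
  have Ieq: "I = insert k (I - {k})" using I by auto
  have hm: "(\<lambda>p. h i (p i) (p k)) \<in> borel_measurable (PiM J (\<lambda>_. \<mu>))" if "i \<in> I" "i \<in> J" "k \<in> J" for i J
  proof -
    have "(\<lambda>p. (p i, p k)) \<in> measurable (PiM J (\<lambda>_. \<mu>)) (\<mu> \<Otimes>\<^sub>M \<mu>)"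
      using that by measurable
    from measurable_compose[OF this h[OF that(1)]] show ?thesis by simp
  qed
  have fm: "(\<lambda>p. g (p k) * (\<Prod>i\<in>I-{k}. h i (p i) (p k))) \<in> borel_measurable (PiM (insert k (I-{k})) (\<lambda>_. \<mu>))"
    apply (intro borel_measurable_times_ennreal borel_measurable_prod_ennreal)
    using I hm[of _ "insert k (I-{k})"] measurable_compose[OF measurable_component_singleton[of k "insert k (I-{k})" "\<lambda>_. \<mu>"] g] by auto
  have hz: "(\<lambda>z. h i z y) \<in> borel_measurable \<mu>" if "i \<in> I" for i y
  proof -
    have "(\<lambda>z. (z,y)) \<in> measurable \<mu> (\<mu> \<Otimes>\<^sub>M \<mu>)"
      using space_mu by (intro measurable_Pair) auto
    from measurable_compose[OF this h[OF that]] show ?thesis by simp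
  qed
  have "(\<integral>\<^sup>+p. g (p k) * (\<Prod>i\<in>I-{k}. h i (p i) (p k)) \<partial>PiM I (\<lambda>_. \<mu>))
     = (\<integral>\<^sup>+y. (\<integral>\<^sup>+x. g ((x(k:=y)) k) * (\<Prod>i\<in>I-{k}. h i ((x(k:=y)) i) ((x(k:=y)) k)) \<partial>PiM (I-{k}) (\<lambda>_. \<mu>)) \<partial>\<mu>)"
    apply (subst Ieq)
    apply (rule PS.product_nn_integral_insert_rev)
    using I fm by auto
  also have "\<dots> = (\<integral>\<^sup>+y. (\<integral>\<^sup>+x. g y * (\<Prod>i\<in>I-{k}. h i (x i) y) \<partial>PiM (I-{k}) (\<lambda>_. \<mu>)) \<partial>\<mu>)"
    by (intro nn_integral_cong prod.cong arg_cong2[where f="(*)"]) auto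
  also have "\<dots> = (\<integral>\<^sup>+y. g y * (\<integral>\<^sup>+x. (\<Prod>i\<in>I-{k}. h i (x i) y) \<partial>PiM (I-{k}) (\<lambda>_. \<mu>)) \<partial>\<mu>)"
    apply (intro nn_integral_cong nn_integral_cmult)
    apply (rule borel_measurable_prod_ennreal)
    using hz by (auto intro: measurable_compose[OF measurable_component_singleton])
  also have "\<dots> = (\<integral>\<^sup>+y. g y * (\<Prod>i\<in>I-{k}. \<integral>\<^sup>+z. h i z y \<partial>\<mu>) \<partial>\<mu>)"
    apply (intro nn_integral_cong arg_cong2[where f="(*)"] refl)
    apply (rule PS.product_nn_integral_prod)
    using I hz by auto
  finally show ?thesis .
qed

definition dind :: "real^'d \<Rightarrow> real^'d \<Rightarrow> ennreal" where
  "dind z x = (if dominated_by z x then 1 else 0)"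

definition F :: "real^'d \<Rightarrow> ennreal" where
  "F x = emeasure \<mu> {z. dominated_by z x}"

abbreviation MM :: "nat \<Rightarrow> (nat \<Rightarrow> real^'d) measure" where
  "MM n \<equiv> PiM {1..n} (\<lambda>_. \<mu>)"

definition Rset :: "nat \<Rightarrow> nat \<Rightarrow> (nat \<Rightarrow> real^'d) set" where
  "Rset n k = {p \<in> space (MM n). \<forall>i\<in>{1..<k}. dominated_by (p i) (p k)}"

lemma Rset_space[simp]: "Rset n k \<inter> space (MM n) = Rset n k"
  "Rset n j \<inter> Rset n k \<inter> space (MM n) = Rset n j \<inter> Rset n k"
  by (auto simp: Rset_def)

lemma dominated_by_finite: "dominated_by q p \<longleftrightarrow> (\<forall>i\<in>UNIV. q $ i < p $ i)"
  by (simp add: dominated_by_def)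

lemma dom_pair_meas:
  "Measurable.pred (\<mu> \<Otimes>\<^sub>M \<mu>) (\<lambda>(z,x). dominated_by z x)"
proof -
  have c: "(\<lambda>w. f w $ c) \<in> borel_measurable (\<mu> \<Otimes>\<^sub>M \<mu>)" if "f \<in> measurable (\<mu> \<Otimes>\<^sub>M \<mu>) \<mu>" for f and c
  proof -
    have "f \<in> measurable (\<mu> \<Otimes>\<^sub>M \<mu>) borel" using that by (simp only: meas_mu_borel)
    from measurable_compose[OF this borel_measurable_nth] show ?thesis by simp
  qed
  have "Measurable.pred (\<mu> \<Otimes>\<^sub>M \<mu>) (\<lambda>w. fst w $ c < snd w $ c)" for c
    using borel_measurable_less[OF c[OF measurable_fst] c[OF measurable_snd]]
    by (simp add: pred_def)
  then have pr: "Measurable.pred (\<mu> \<Otimes>\<^sub>M \<mu>) (\<lambda>w. \<forall>c\<in>UNIV. fst w $ c < snd w $ c)"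
    by (intro pred_intros_finite(3)) auto
  have eq: "(\<lambda>(z,x). dominated_by z x) = (\<lambda>w. \<forall>c\<in>UNIV. fst w $ c < snd w $ c)"
    by (auto simp: dominated_by_def fun_eq_iff)
  show ?thesis by (subst eq) (rule pr)
qed

lemma dind_meas: "(\<lambda>(z,x). dind z x) \<in> borel_measurable (\<mu> \<Otimes>\<^sub>M \<mu>)"
proof -
  have "(\<lambda>(z,x). dind z x) = (\<lambda>w. if (\<lambda>(z,x). dominated_by z x) w then 1 else 0)"
    by (auto simp: dind_def fun_eq_iff)
  then show ?thesis using dom_pair_meas by simp
qed

lemma vec_comp_meas:
  assumes "i \<in> I"
  shows "(\<lambda>w. w i $ c) \<in> borel_measurable (PiM I (\<lambda>_. \<mu>))"
proof -
  have "(\<lambda>w. w i) \<in> measurable (PiM I (\<lambda>_. \<mu>)) borel"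
    using measurable_component_singleton[OF assms(1), of "\<lambda>_. \<mu>"]
    by (simp only: meas_mu_borel)
  from measurable_compose[OF this borel_measurable_nth] show ?thesis by simp
qed

lemma dom_meas:
  assumes "i \<in> I" "k \<in> I"
  shows "Measurable.pred (PiM I (\<lambda>_. \<mu>)) (\<lambda>p. dominated_by (p i) (p k))"
proof -
  have "Measurable.pred (PiM I (\<lambda>_. \<mu>)) (\<lambda>p. p i $ c < p k $ c)" for c
    using borel_measurable_less[OF vec_comp_meas[OF assms(1)] vec_comp_meas[OF assms(2)]]
    by (simp add: pred_def)
  then have "Measurable.pred (PiM I (\<lambda>_. \<mu>)) (\<lambda>p. \<forall>c\<in>UNIV. p i $ c < p k $ c)"
    by (intro pred_intros_finite(3)) auto
  then show ?thesis unfolding dominated_by_finite .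
qed

lemma Rset_sets: "k \<in> {1..n} \<Longrightarrow> Rset n k \<in> sets (MM n)"
proof -
  assume k: "k \<in> {1..n}"
  have "Measurable.pred (MM n) (\<lambda>p. \<forall>i\<in>{1..<k}. dominated_by (p i) (p k))"
    by (intro pred_intros_finite(3) dom_meas) (use k in auto)
  then show ?thesis unfolding Rset_def pred_def .
qed

lemma dom_set_sets: "{z. dominated_by z x} \<in> sets \<mu>"
proof -
  have "(\<lambda>z. (z,x)) \<in> measurable \<mu> (\<mu> \<Otimes>\<^sub>M \<mu>)" by (intro measurable_Pair) auto
  from measurable_compose[OF this dom_pair_meas] show ?thesis
    by (simp add: pred_def)
qed

lemma prod_01:
  "finite A \<Longrightarrow> (\<Prod>i\<in>A. if P i then 1 else 0 :: ennreal) = (if \<forall>i\<in>A. P i then 1 else 0)"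
  by (induction A rule: finite_induct) auto

lemma int_if_dom:
  "(\<integral>\<^sup>+z. (if Q \<longrightarrow> dominated_by z x then 1 else 0) \<partial>\<mu>) = (if Q then F x else 1)"
proof (cases Q)
  case True
  have "(\<integral>\<^sup>+z. (if Q \<longrightarrow> dominated_by z x then 1 else 0) \<partial>\<mu>) = (\<integral>\<^sup>+z. indicator {z. dominated_by z x} z \<partial>\<mu>)"
    using True by (intro nn_integral_cong) (auto simp: indicator_def)
  also have "\<dots> = F x" using dom_set_sets by (simp add: F_def)
  finally show ?thesis using True by simp
next
  case False
  then show ?thesis using emeasure_space_1 by simp
qed

lemma E1:
  assumes k: "k \<in> {1..n}"
  shows "emeasure (MM n) (Rset n k) = (\<integral>\<^sup>+x. F x ^ (k-1) \<partial>\<mu>)"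
proof -
  let ?I = "{1..n}"
  let ?h = "\<lambda>i z x. if i < k \<longrightarrow> dominated_by z x then 1 else (0::ennreal)"
  have "emeasure (MM n) (Rset n k) = (\<integral>\<^sup>+p. indicator (Rset n k) p \<partial>MM n)"
    using Rset_sets[OF k] by simp
  also have "\<dots> = (\<integral>\<^sup>+p. 1 * (\<Prod>i\<in>?I-{k}. ?h i (p i) (p k)) \<partial>MM n)"
  proof (intro nn_integral_cong)
    fix p assume p: "p \<in> space (MM n)"
    have "{1..<k} = {i\<in>?I-{k}. i < k}" using k by auto
    then show "indicator (Rset n k) p = 1 * (\<Prod>i\<in>?I-{k}. ?h i (p i) (p k))"
      using p by (subst prod_01) (auto simp: Rset_def indicator_def)
  qed
  also have "\<dots> = (\<integral>\<^sup>+x. 1 * (\<Prod>i\<in>?I-{k}. \<integral>\<^sup>+z. ?h i z x \<partial>\<mu>) \<partial>\<mu>)"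
  proof (rule PL)
    show "(\<lambda>(z, x). ?h i z x) \<in> borel_measurable (\<mu> \<Otimes>\<^sub>M \<mu>)" for i
    proof -
      have "(\<lambda>(z, x). ?h i z x) = (\<lambda>w. if i < k \<longrightarrow> (\<lambda>(z,x). dominated_by z x) w then 1 else 0)"
        by (auto simp: fun_eq_iff)
      then show ?thesis using dom_pair_meas by simp
    qed
  qed (use k in auto)
  also have "\<dots> = (\<integral>\<^sup>+x. F x ^ (k-1) \<partial>\<mu>)"
  proof (intro nn_integral_cong)
    fix x
    have "(\<Prod>i\<in>?I-{k}. \<integral>\<^sup>+z. ?h i z x \<partial>\<mu>) = (\<Prod>i\<in>?I-{k}. if i < k then F x else 1)"
      by (intro prod.cong refl int_if_dom)
    also have "\<dots> = F x ^ card ((?I-{k}) \<inter> {i. i < k})"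
      by (subst prod.If_cases) (auto simp: prod.neutral)
    also have "(?I-{k}) \<inter> {i. i < k} = {1..<k}" using k by auto
    finally show "1 * (\<Prod>i\<in>?I-{k}. \<integral>\<^sup>+z. ?h i z x \<partial>\<mu>) = F x ^ (k-1)"
      by simp
  qed
  finally show ?thesis .
qed

lemma dom_trans: "dominated_by a b \<Longrightarrow> dominated_by b c \<Longrightarrow> dominated_by a c"
  unfolding dominated_by_def using less_trans by blast

lemma F_meas: "F \<in> borel_measurable \<mu>"
proof -
  have Q: "{w \<in> space (\<mu> \<Otimes>\<^sub>M \<mu>). (\<lambda>(x,z). dominated_by z x) w} \<in> sets (\<mu> \<Otimes>\<^sub>M \<mu>)"
  proof -
    have "(\<lambda>(x,z). dominated_by z x) = (\<lambda>(z,x). dominated_by z x) \<circ> (\<lambda>(x,z). (z,x))"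
      by (auto simp: fun_eq_iff)
    moreover have "(\<lambda>(x,z). (z,x)) \<in> measurable (\<mu> \<Otimes>\<^sub>M \<mu>) (\<mu> \<Otimes>\<^sub>M \<mu>)"
      by (rule measurable_pair_swap')
    ultimately have "Measurable.pred (\<mu> \<Otimes>\<^sub>M \<mu>) (\<lambda>(x,z). dominated_by z x)"
      using measurable_comp[OF _ dom_pair_meas] by metis
    then show ?thesis by (simp add: pred_def)
  qed
  have "(\<lambda>x. emeasure \<mu> (Pair x -` {w \<in> space (\<mu> \<Otimes>\<^sub>M \<mu>). (\<lambda>(x,z). dominated_by z x) w})) \<in> borel_measurable \<mu>"
    by (rule measurable_emeasure_Pair[OF Q])
  moreover have "Pair x -` {w \<in> space (\<mu> \<Otimes>\<^sub>M \<mu>). (\<lambda>(x,z). dominated_by z x) w} = {z. dominated_by z x}" for x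
    by (auto simp: space_pair_measure)
  ultimately show ?thesis unfolding F_def[abs_def] by simp
qed

lemma int_if_dom2:
  fixes i j k :: nat
  shows
  "(\<integral>\<^sup>+z. (if (i < j \<longrightarrow> dominated_by z w) \<and> (j < i \<and> i < k \<longrightarrow> dominated_by z y) then 1 else 0) \<partial>\<mu>)
   = (if i < j then F w else if j < i \<and> i < k then F y else 1)"
proof (cases "i < j")
  case True
  then have "\<not> j < i" by linarith
  then show ?thesis using True int_if_dom[of True w] by simp
next
  case False
  then show ?thesis using int_if_dom[of "j < i \<and> i < k" y] by simp
qed

lemma E2:
  assumes jk: "1 \<le> j" "j < k" "k \<le> n"
  shows "emeasure (MM n) (Rset n j \<inter> Rset n k) = (\<integral>\<^sup>+x. F x ^ (k-1-j) * (\<integral>\<^sup>+y. dind y x * F y ^ (j-1) \<partial>\<mu>) \<partial>\<mu>)"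
proof -
  let ?I = "{1..n}"
  let ?J = "?I - {k}"
  let ?H = "\<lambda>i z w y. if (i < j \<longrightarrow> dominated_by z w) \<and> (j < i \<and> i < k \<longrightarrow> dominated_by z y) then 1 else (0::ennreal)"
  have Ieq: "?I = insert k ?J" using jk by auto
  have RS: "Rset n j \<inter> Rset n k \<in> sets (MM n)" using Rset_sets[of j n] Rset_sets[of k n] jk by auto
  have "emeasure (MM n) (Rset n j \<inter> Rset n k) = (\<integral>\<^sup>+p. indicator (Rset n j \<inter> Rset n k) p \<partial>MM n)"
    using RS by simp
  also have "\<dots> = (\<integral>\<^sup>+p. indicator (Rset n j \<inter> Rset n k) p \<partial>PiM (insert k ?J) (\<lambda>_. \<mu>))"
    using Ieq by simp
  also have "\<dots> = (\<integral>\<^sup>+y. (\<integral>\<^sup>+q. indicator (Rset n j \<inter> Rset n k) (q(k:=y)) \<partial>PiM ?J (\<lambda>_. \<mu>)) \<partial>\<mu>)"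
    apply (rule PS.product_nn_integral_insert_rev)
    using RS Ieq by (auto simp del: atLeastAtMost_iff Diff_iff insert_Diff_single)
  also have "\<dots> = (\<integral>\<^sup>+y. (\<integral>\<^sup>+q. dind (q j) y * (\<Prod>i\<in>?J-{j}. ?H i (q i) (q j) y) \<partial>PiM ?J (\<lambda>_. \<mu>)) \<partial>\<mu>)"
  proof (intro nn_integral_cong)
    fix y q assume q: "q \<in> space (PiM ?J (\<lambda>_. \<mu>))"
    have qs: "q(k:=y) \<in> space (MM n)"
      using q jk by (auto simp: space_PiM PiE_def extensional_def)
    have iff: "(q(k:=y)) \<in> Rset n j \<inter> Rset n k \<longleftrightarrow>
      (dominated_by (q j) y \<and> (\<forall>i\<in>?J-{j}. (i < j \<longrightarrow> dominated_by (q i) (q j)) \<and> (j < i \<and> i < k \<longrightarrow> dominated_by (q i) y)))"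
    proof
      assume "(q(k:=y)) \<in> Rset n j \<inter> Rset n k"
      then show "dominated_by (q j) y \<and> (\<forall>i\<in>?J-{j}. (i < j \<longrightarrow> dominated_by (q i) (q j)) \<and> (j < i \<and> i < k \<longrightarrow> dominated_by (q i) y))"
        using jk unfolding Rset_def by (auto split: if_splits)
    next
      assume a: "dominated_by (q j) y \<and> (\<forall>i\<in>?J-{j}. (i < j \<longrightarrow> dominated_by (q i) (q j)) \<and> (j < i \<and> i < k \<longrightarrow> dominated_by (q i) y))"
      have "\<forall>i\<in>{1..<k}. dominated_by (q i) y"
      proof
        fix i assume i: "i \<in> {1..<k}"
        consider "i < j" | "i = j" | "j < i" by linarith
        then show "dominated_by (q i) y"
        proof cases
          case 1
          then have "i \<in> {1..n}-{k}-{j}" using i jk by auto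
          with a 1 have "dominated_by (q i) (q j)" by auto
          with a show ?thesis using dom_trans by blast
        next
          case 2
          with a show ?thesis by simp
        next
          case 3
          then have "i \<in> {1..n}-{k}-{j}" using i jk by auto
          with a 3 i show ?thesis by auto
        qed
      qed
      then show "(q(k:=y)) \<in> Rset n j \<inter> Rset n k"
        using a qs jk unfolding Rset_def by auto
    qed
    show "indicator (Rset n j \<inter> Rset n k) (q(k:=y)) = dind (q j) y * (\<Prod>i\<in>?J-{j}. ?H i (q i) (q j) y)"
      unfolding indicator_def iff dind_def by (subst prod_01) auto
  qed
  also have "\<dots> = (\<integral>\<^sup>+y. (\<integral>\<^sup>+w. dind w y * (\<Prod>i\<in>?J-{j}. \<integral>\<^sup>+z. ?H i z w y \<partial>\<mu>) \<partial>\<mu>) \<partial>\<mu>)"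
  proof (intro nn_integral_cong PL)
    fix y i
    show "(\<lambda>w. dind w y) \<in> borel_measurable \<mu>"
    proof -
      have "(\<lambda>z. (z,y)) \<in> measurable \<mu> (\<mu> \<Otimes>\<^sub>M \<mu>)" by (intro measurable_Pair) auto
      from measurable_compose[OF this dind_meas] show ?thesis by simp
    qed
    have "(\<lambda>(z, w). ?H i z w y) = (\<lambda>v. if (i < j \<longrightarrow> (\<lambda>(z,x). dominated_by z x) v) \<and> (j < i \<and> i < k \<longrightarrow> (\<lambda>(z,x). dominated_by z x) (fst v, y)) then 1 else 0)"
      by (auto simp: fun_eq_iff)
    moreover have "Measurable.pred (\<mu> \<Otimes>\<^sub>M \<mu>) (\<lambda>v. (\<lambda>(z,x). dominated_by z x) (fst v, y))"
    proof -
      have "(\<lambda>v. (fst v, y)) \<in> measurable (\<mu> \<Otimes>\<^sub>M \<mu>) (\<mu> \<Otimes>\<^sub>M \<mu>)"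
        by (intro measurable_Pair) (auto simp: space_pair_measure)
      from measurable_compose[OF this dom_pair_meas] show ?thesis by simp
    qed
    ultimately show "(\<lambda>(z, w). ?H i z w y) \<in> borel_measurable (\<mu> \<Otimes>\<^sub>M \<mu>)"
      using dom_pair_meas by simp
  qed (use jk in auto)
  also have "\<dots> = (\<integral>\<^sup>+y. (\<integral>\<^sup>+w. F y ^ (k-1-j) * (dind w y * F w ^ (j-1)) \<partial>\<mu>) \<partial>\<mu>)"
  proof (intro nn_integral_cong)
    fix y w
    have "(\<Prod>i\<in>?J-{j}. \<integral>\<^sup>+z. ?H i z w y \<partial>\<mu>) = (\<Prod>i\<in>?J-{j}. if i < j then F w else if j < i \<and> i < k then F y else 1)"
      by (intro prod.cong refl int_if_dom2)
    also have "\<dots> = F w ^ card ((?J-{j}) \<inter> {i. i < j}) * F y ^ card ((?J-{j}) \<inter> - {i. i < j} \<inter> {i. j < i \<and> i < k})"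
      by (subst prod.If_cases, simp, subst prod.If_cases, auto simp: prod.neutral)
    also have "(?J-{j}) \<inter> {i. i < j} = {1..<j}" using jk by auto
    also have "(?J-{j}) \<inter> - {i. i < j} \<inter> {i. j < i \<and> i < k} = {j<..<k}" using jk by auto
    finally show "dind w y * (\<Prod>i\<in>?J-{j}. \<integral>\<^sup>+z. ?H i z w y \<partial>\<mu>) = F y ^ (k-1-j) * (dind w y * F w ^ (j-1))"
      by (simp add: mult_ac)
  qed
  also have "\<dots> = (\<integral>\<^sup>+y. F y ^ (k-1-j) * (\<integral>\<^sup>+w. dind w y * F w ^ (j-1) \<partial>\<mu>) \<partial>\<mu>)"
  proof (intro nn_integral_cong nn_integral_cmult)
    fix y
    have "(\<lambda>z. (z,y)) \<in> measurable \<mu> (\<mu> \<Otimes>\<^sub>M \<mu>)" by (intro measurable_Pair) auto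
    from measurable_compose[OF this dind_meas] have "(\<lambda>w. dind w y) \<in> borel_measurable \<mu>" by simp
    then show "(\<lambda>w. dind w y * F w ^ (j-1)) \<in> borel_measurable \<mu>" using F_meas by measurable
  qed
  finally show ?thesis .
qed

lemma MM_prob: "prob_space (MM n)"
  by (rule prob_space_PiM) (rule prob_space_axioms)

lemma Z_eq:
  assumes p: "p \<in> space (MM n)"
  shows "real (num_dom_records n p) = (\<Sum>k=1..n. indicator (Rset n k) p)"
proof -
  have "real (num_dom_records n p) = (\<Sum>k\<in>{k \<in> {1..n}. \<forall>i\<in>{1..<k}. dominated_by (p i) (p k)}. 1)"
    unfolding num_dom_records_def by simp
  also have "\<dots> = (\<Sum>k=1..n. if \<forall>i\<in>{1..<k}. dominated_by (p i) (p k) then 1 else 0)"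
    by (rule sum.inter_filter) simp
  also have "\<dots> = (\<Sum>k=1..n. indicator (Rset n k) p)"
    using p by (intro sum.cong) (auto simp: Rset_def indicator_def)
  finally show ?thesis .
qed

lemma final_abstract:
  fixes a :: "nat \<Rightarrow> real" and d :: nat
  assumes A: "\<And>k. 1 \<le> k \<Longrightarrow> (\<integral>\<^sup>+x. F x ^ (k-1) \<partial>\<mu>) = ennreal (a k)" and a0: "\<And>k. 1 \<le> k \<Longrightarrow> 0 \<le> a k"
    and B: "\<And>j k. 1 \<le> j \<Longrightarrow> j < k \<Longrightarrow> (\<integral>\<^sup>+x. F x ^ (k-1-j) * (\<integral>\<^sup>+y. dind y x * F y ^ (j-1) \<partial>\<mu>) \<partial>\<mu>) = ennreal (a k / real j ^ d)"
  shows "rec_mean (MM n) n = (\<Sum>k=1..n. a k) \<and>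
         rec_var (MM n) n = 2 * (\<Sum>k=2..n. a k * gen_harm d (k - 1)) + (\<Sum>k=1..n. a k) - (\<Sum>k=1..n. a k)\<^sup>2"
proof -
  interpret P: prob_space "MM n" by (rule MM_prob)
  have Rs: "k \<in> {1..n} \<Longrightarrow> Rset n k \<in> sets (MM n)" for k by (rule Rset_sets)
  have pk: "measure (MM n) (Rset n k) = a k" if "k \<in> {1..n}" for k
    using E1[OF that] A[of k] that a0[of k] by (simp add: measure_def)
  have pjk: "measure (MM n) (Rset n j \<inter> Rset n k) = a k / real j ^ d" if "1 \<le> j" "j < k" "k \<le> n" for j k
    using E2[OF that] B[OF that(1,2)] that a0[of k] by (simp add: measure_def)
  define Z where "Z = (\<lambda>p. \<Sum>k=1..n. indicator (Rset n k) p :: real)"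
  have intI: "integrable (MM n) (indicator (Rset n k) :: _ \<Rightarrow> real)" if "k \<in> {1..n}" for k
    using Rs[OF that] P.emeasure_finite by (intro integrable_real_indicator) (auto simp: less_top[symmetric])
  have intZ: "integrable (MM n) Z" unfolding Z_def using intI by auto
  have Zsq: "(Z p)\<^sup>2 = Z p + 2 * (\<Sum>k=1..n. \<Sum>j=1..<k. indicator (Rset n j \<inter> Rset n k) p)" for p
    unfolding Z_def indicator_inter_arith by (rule sq_sum_01) (simp add: indicator_def)
  have intII: "integrable (MM n) (indicator (Rset n j \<inter> Rset n k) :: _ \<Rightarrow> real)" if "j \<in> {1..n}" "k \<in> {1..n}" for j k
    using Rs[OF that(1)] Rs[OF that(2)] P.emeasure_finite by (intro integrable_real_indicator) (auto simp: less_top[symmetric])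
  have intS: "integrable (MM n) (\<lambda>p. \<Sum>k=1..n. \<Sum>j=1..<k. indicator (Rset n j \<inter> Rset n k) p :: real)"
    apply (rule Bochner_Integration.integrable_sum)
    apply (rule Bochner_Integration.integrable_sum)
    apply (rule intII)
    apply auto
    done
  have intZ2: "integrable (MM n) (\<lambda>p. (Z p)\<^sup>2)" unfolding Zsq
    by (intro Bochner_Integration.integrable_add integrable_mult_right intZ intS)
  have iI: "integral\<^sup>L (MM n) (indicator (Rset n k) :: _ \<Rightarrow> real) = measure (MM n) (Rset n k)" for k
    by (simp only: Bochner_Integration.integral_indicator Rset_space)
  have iII: "integral\<^sup>L (MM n) (indicator (Rset n j \<inter> Rset n k) :: _ \<Rightarrow> real) = measure (MM n) (Rset n j \<inter> Rset n k)" for j k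
    by (simp only: Bochner_Integration.integral_indicator Rset_space)
  have EZ: "P.expectation Z = (\<Sum>k=1..n. a k)"
  proof -
    have "P.expectation Z = (\<Sum>k=1..n. integral\<^sup>L (MM n) (indicator (Rset n k) :: _ \<Rightarrow> real))"
      unfolding Z_def by (rule Bochner_Integration.integral_sum) (rule intI)
    also have "\<dots> = (\<Sum>k=1..n. a k)"
      by (intro sum.cong refl) (simp only: iI pk)
    finally show ?thesis .
  qed
  have EZ2: "P.expectation (\<lambda>p. (Z p)\<^sup>2) = (\<Sum>k=1..n. a k) + 2 * (\<Sum>k=1..n. a k * gen_harm d (k - 1))"
  proof -
    have "P.expectation (\<lambda>p. (Z p)\<^sup>2) = P.expectation (\<lambda>p. Z p + 2 * (\<Sum>k=1..n. \<Sum>j=1..<k. indicator (Rset n j \<inter> Rset n k) p))"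
      by (simp only: Zsq)
    also have "\<dots> = P.expectation Z + P.expectation (\<lambda>p. 2 * (\<Sum>k=1..n. \<Sum>j=1..<k. indicator (Rset n j \<inter> Rset n k) p))"
      by (rule Bochner_Integration.integral_add[OF intZ integrable_mult_right[OF intS]])
    also have "P.expectation (\<lambda>p. 2 * (\<Sum>k=1..n. \<Sum>j=1..<k. indicator (Rset n j \<inter> Rset n k) p))
        = 2 * P.expectation (\<lambda>p. (\<Sum>k=1..n. \<Sum>j=1..<k. indicator (Rset n j \<inter> Rset n k) p :: real))"
      by (rule Bochner_Integration.integral_mult_right) (rule intS)
    also have "P.expectation (\<lambda>p. (\<Sum>k=1..n. \<Sum>j=1..<k. indicator (Rset n j \<inter> Rset n k) p :: real))
        = (\<Sum>k=1..n. P.expectation (\<lambda>p. \<Sum>j=1..<k. indicator (Rset n j \<inter> Rset n k) p :: real))"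
      apply (rule Bochner_Integration.integral_sum)
      apply (rule Bochner_Integration.integrable_sum)
      apply (rule intII)
      apply auto
      done
    also have "\<dots> = (\<Sum>k=1..n. \<Sum>j=1..<k. measure (MM n) (Rset n j \<inter> Rset n k))"
    proof (intro sum.cong refl)
      fix k assume k: "k \<in> {1..n}"
      have "P.expectation (\<lambda>p. \<Sum>j=1..<k. indicator (Rset n j \<inter> Rset n k) p :: real)
          = (\<Sum>j=1..<k. P.expectation (indicator (Rset n j \<inter> Rset n k) :: _ \<Rightarrow> real))"
        apply (rule Bochner_Integration.integral_sum)
        apply (rule intII)
        using k apply auto
        done
      also have "\<dots> = (\<Sum>j=1..<k. measure (MM n) (Rset n j \<inter> Rset n k))"
        by (simp only: iII)
      finally show "P.expectation (\<lambda>p. \<Sum>j=1..<k. indicator (Rset n j \<inter> Rset n k) p :: real)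
          = (\<Sum>j=1..<k. measure (MM n) (Rset n j \<inter> Rset n k))" .
    qed
    also have "(\<Sum>k=1..n. \<Sum>j=1..<k. measure (MM n) (Rset n j \<inter> Rset n k)) = (\<Sum>k=1..n. a k * gen_harm d (k - 1))"
    proof (intro sum.cong refl)
      fix k assume k: "k \<in> {1..n}"
      have e: "{1..<k} = {1..k-1}" using k by auto
      have "(\<Sum>j=1..<k. measure (MM n) (Rset n j \<inter> Rset n k)) = (\<Sum>j=1..<k. a k / real j ^ d)"
        using k by (intro sum.cong refl pjk) auto
      also have "\<dots> = a k * gen_harm d (k - 1)"
        unfolding gen_harm_def sum_distrib_left e by (intro sum.cong refl) simp
      finally show "(\<Sum>j=1..<k. measure (MM n) (Rset n j \<inter> Rset n k)) = a k * gen_harm d (k - 1)" .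
    qed
    finally show ?thesis using EZ by simp
  qed
  have mean: "rec_mean (MM n) n = P.expectation Z"
    unfolding rec_mean_def by (rule Bochner_Integration.integral_cong) (simp_all add: Z_eq Z_def)
  have var: "rec_var (MM n) n = P.variance Z"
    unfolding rec_var_def mean by (rule Bochner_Integration.integral_cong) (simp_all add: Z_eq Z_def)
  have s12: "(\<Sum>k=1..n. a k * gen_harm d (k - 1)) = (\<Sum>k=2..n. a k * gen_harm d (k - 1))"
  proof (cases n)
    case 0 then show ?thesis by simp
  next
    case (Suc m)
    then have "{1..n} = insert 1 {2..n}" by auto
    then show ?thesis by (simp add: gen_harm_def)
  qed
  show ?thesis
    using mean var EZ EZ2 P.variance_eq[OF intZ intZ2] s12 by simp
qed

end


lemma beta01:
  fixes p q :: nat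
  shows "(\<integral>\<^sup>+s. ennreal (s ^ p * (1 - s) ^ q) * indicator {0..1} s \<partial>lborel)
       = ennreal (fact p * fact q / fact (p + q + 1))"
proof -
  have B: "((\<lambda>t. t powr (real (p+1) - 1) * (1 - t) powr (real (q+1) - 1)) has_integral Beta (real (p+1)) (real (q+1))) {0..1}"
    by (rule has_integral_Beta_real) auto
  have "((\<lambda>t. t powr (real (p+1) - 1) * (1 - t) powr (real (q+1) - 1)) has_integral Beta (real (p+1)) (real (q+1))) {0<..<1}"
    using B by (simp add: has_integral_Icc_iff_Ioo)
  then have "((\<lambda>t. t ^ p * (1 - t) ^ q) has_integral Beta (real (p+1)) (real (q+1))) {0<..<1}"
    by (rule has_integral_cong[THEN iffD1, rotated]) (auto simp: powr_realpow)
  then have H: "((\<lambda>t. t ^ p * (1 - t) ^ q) has_integral Beta (real (p+1)) (real (q+1))) {0..1}"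
    by (simp add: has_integral_Icc_iff_Ioo)
  have "Beta (real (p+1)) (real (q+1)) = fact p * fact q / fact (p + q + 1)"
  proof -
    have "Gamma (real (p+1)) = fact p" "Gamma (real (q+1)) = fact q"
         "Gamma (real (p+1) + real (q+1)) = fact (p + q + 1)"
      using Gamma_fact[of p, where 'a=real] Gamma_fact[of q, where 'a=real] Gamma_fact[of "p+q+1", where 'a=real]
      by (simp_all add: add_ac)
    then show ?thesis by (simp add: Beta_def)
  qed
  moreover have "(\<integral>\<^sup>+s. ennreal (s ^ p * (1 - s) ^ q) * indicator {0..1} s \<partial>lborel) = ennreal (Beta (real (p+1)) (real (q+1)))"
    by (rule nn_integral_has_integral_lebesgue'[OF _ H]) auto
  ultimately show ?thesis by simp
qed

lemma beta_t:
  fixes p q :: nat and t :: real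
  assumes t: "t \<ge> 0"
  shows "(\<integral>\<^sup>+y. ennreal (y ^ p * (t - y) ^ q) * indicator {0..t} y \<partial>lborel)
       = ennreal (t ^ (p + q + 1) * fact p * fact q / fact (p + q + 1))"
proof (cases "t = 0")
  case True
  have "AE y in lborel. ennreal (y ^ p * (t - y) ^ q) * indicator {0..t} y = 0"
    using AE_lborel_singleton[of 0] by eventually_elim (auto simp: True indicator_def)
  from nn_integral_cong_AE[OF this] show ?thesis using True by simp
next
  case False
  with t have t: "t > 0" by simp
  have "(\<integral>\<^sup>+y. ennreal (y ^ p * (t - y) ^ q) * indicator {0..t} y \<partial>lborel)
      = ennreal \<bar>t\<bar> * (\<integral>\<^sup>+s. ennreal ((0 + t * s) ^ p * (t - (0 + t * s)) ^ q) * indicator {0..t} (0 + t * s) \<partial>lborel)"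
    by (rule nn_integral_real_affine) (use t in auto)
  also have "(\<integral>\<^sup>+s. ennreal ((0 + t * s) ^ p * (t - (0 + t * s)) ^ q) * indicator {0..t} (0 + t * s) \<partial>lborel)
      = (\<integral>\<^sup>+s. ennreal (t ^ (p + q)) * (ennreal (s ^ p * (1 - s) ^ q) * indicator {0..1} s) \<partial>lborel)"
  proof (intro nn_integral_cong)
    fix s :: real
    have "t * s \<in> {0..t} \<longleftrightarrow> s \<in> {0..1}" using t
      by (auto simp: zero_le_mult_iff mult_le_cancel_left1)
    moreover have "(t * s) ^ p * (t - t * s) ^ q = t ^ (p + q) * (s ^ p * (1 - s) ^ q)"
    proof -
      have "t - t * s = t * (1 - s)" by (simp add: algebra_simps)
      then show ?thesis by (simp only: power_mult_distrib power_add mult_ac)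
    qed
    moreover have "s \<in> {0..1} \<Longrightarrow> 0 \<le> s ^ p * (1 - s) ^ q" by auto
    ultimately show "ennreal ((0 + t * s) ^ p * (t - (0 + t * s)) ^ q) * indicator {0..t} (0 + t * s)
        = ennreal (t ^ (p + q)) * (ennreal (s ^ p * (1 - s) ^ q) * indicator {0..1} s)"
      using t by (auto simp: indicator_def ennreal_mult)
  qed
  also have "\<dots> = ennreal (t ^ (p + q)) * ennreal (fact p * fact q / fact (p + q + 1))"
    by (subst nn_integral_cmult) (auto simp: beta01)
  finally show ?thesis using t
    by (simp add: ennreal_mult[symmetric] power_add mult_ac)
qed

lemma dirichlet_aux:
  fixes A :: "'a set" and m :: nat and t :: real
  assumes "finite A" "t \<ge> 0"
  shows "(\<integral>\<^sup>+x. (if (\<forall>i\<in>A. 0 \<le> x i) \<and> sum x A \<le> t then ennreal (\<Prod>i\<in>A. x i ^ m) else 0) \<partial>PiM A (\<lambda>_. lborel))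
       = ennreal (t ^ (card A * (m+1)) * fact m ^ card A / fact (card A * (m+1)))"
  using assms
proof (induction arbitrary: t rule: finite_induct)
  case (empty t)
  then show ?case by (simp add: PiM_empty)
next
  case (insert b A t)
  interpret product_sigma_finite "\<lambda>_. lborel :: real measure" by standard
  define n where "n = card A"
  define q where "q = n * (m + 1)"
  define C :: real where "C = fact m ^ n / fact q"
  have C0: "C \<ge> 0" by (simp add: C_def)
  have meas: "(\<lambda>x. if (\<forall>i\<in>B. 0 \<le> x i) \<and> sum x B \<le> s then ennreal (\<Prod>i\<in>B. x i ^ m) else 0) \<in> borel_measurable (PiM B (\<lambda>_. lborel))"
    if "finite B" for B :: "'a set" and s
    using that by measurable
  have "(\<integral>\<^sup>+x. (if (\<forall>i\<in>insert b A. 0 \<le> x i) \<and> sum x (insert b A) \<le> t then ennreal (\<Prod>i\<in>insert b A. x i ^ m) else 0) \<partial>PiM (insert b A) (\<lambda>_. lborel))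
     = (\<integral>\<^sup>+y. (\<integral>\<^sup>+x. (if (\<forall>i\<in>insert b A. 0 \<le> (x(b:=y)) i) \<and> sum (x(b:=y)) (insert b A) \<le> t then ennreal (\<Prod>i\<in>insert b A. (x(b:=y)) i ^ m) else 0) \<partial>PiM A (\<lambda>_. lborel)) \<partial>lborel)"
    by (rule product_nn_integral_insert_rev) (use insert meas in auto)
  also have "\<dots> = (\<integral>\<^sup>+y. (\<integral>\<^sup>+x. (ennreal (y ^ m) * indicator {0..t} y) * (if (\<forall>i\<in>A. 0 \<le> x i) \<and> sum x A \<le> t - y then ennreal (\<Prod>i\<in>A. x i ^ m) else 0) \<partial>PiM A (\<lambda>_. lborel)) \<partial>lborel)"
  proof (intro nn_integral_cong)
    fix y :: real and x :: "'a \<Rightarrow> real"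
    have s: "sum (x(b:=y)) (insert b A) = y + sum x A"
    proof -
      have "sum (x(b:=y)) A = sum x A" using insert.hyps by (intro sum.cong) auto
      then show ?thesis using insert.hyps by simp
    qed
    have p: "(\<Prod>i\<in>insert b A. (x(b:=y)) i ^ m) = y ^ m * (\<Prod>i\<in>A. x i ^ m)"
    proof -
      have "(\<Prod>i\<in>A. (x(b:=y)) i ^ m) = (\<Prod>i\<in>A. x i ^ m)" using insert.hyps by (intro prod.cong) auto
      then show ?thesis using insert.hyps by simp
    qed
    have e: "(\<forall>i\<in>insert b A. 0 \<le> (x(b:=y)) i) \<longleftrightarrow> 0 \<le> y \<and> (\<forall>i\<in>A. 0 \<le> x i)"
      using insert.hyps by auto
    show "(if (\<forall>i\<in>insert b A. 0 \<le> (x(b:=y)) i) \<and> sum (x(b:=y)) (insert b A) \<le> t then ennreal (\<Prod>i\<in>insert b A. (x(b:=y)) i ^ m) else 0)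
        = (ennreal (y ^ m) * indicator {0..t} y) * (if (\<forall>i\<in>A. 0 \<le> x i) \<and> sum x A \<le> t - y then ennreal (\<Prod>i\<in>A. x i ^ m) else 0)"
    proof (cases "0 \<le> y \<and> (\<forall>i\<in>A. 0 \<le> x i) \<and> y + sum x A \<le> t")
      case True
      then have "y \<le> t" using sum_nonneg[of A x] by auto
      then show ?thesis using True unfolding s p e
        by (auto simp: indicator_def ennreal_mult prod_nonneg)
    next
      case False
      then show ?thesis unfolding s p e by (auto simp: indicator_def)
    qed
  qed
  also have "\<dots> = (\<integral>\<^sup>+y. (ennreal (y ^ m) * indicator {0..t} y) * (\<integral>\<^sup>+x. (if (\<forall>i\<in>A. 0 \<le> x i) \<and> sum x A \<le> t - y then ennreal (\<Prod>i\<in>A. x i ^ m) else 0) \<partial>PiM A (\<lambda>_. lborel)) \<partial>lborel)"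
    by (intro nn_integral_cong nn_integral_cmult meas insert.hyps)
  also have "\<dots> = (\<integral>\<^sup>+y. ennreal C * (ennreal (y ^ m * (t - y) ^ q) * indicator {0..t} y) \<partial>lborel)"
  proof (intro nn_integral_cong)
    fix y :: real
    show "(ennreal (y ^ m) * indicator {0..t} y) * (\<integral>\<^sup>+x. (if (\<forall>i\<in>A. 0 \<le> x i) \<and> sum x A \<le> t - y then ennreal (\<Prod>i\<in>A. x i ^ m) else 0) \<partial>PiM A (\<lambda>_. lborel))
        = ennreal C * (ennreal (y ^ m * (t - y) ^ q) * indicator {0..t} y)"
    proof (cases "y \<in> {0..t}")
      case True
      then have "t - y \<ge> 0" by auto
      from insert.IH[OF this] True C0 show ?thesis
        by (simp add: n_def q_def C_def ennreal_mult[symmetric] mult_ac)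
    next
      case False
      then show ?thesis by simp
    qed
  qed
  also have "\<dots> = ennreal C * ennreal (t ^ (m + q + 1) * fact m * fact q / fact (m + q + 1))"
    by (subst nn_integral_cmult) (auto simp: beta_t insert.prems)
  also have "\<dots> = ennreal (t ^ (card (insert b A) * (m+1)) * fact m ^ card (insert b A) / fact (card (insert b A) * (m+1)))"
  proof -
    have "card (insert b A) = Suc n" using insert.hyps by (simp add: n_def)
    moreover have "m + q + 1 = Suc n * (m + 1)" by (simp add: q_def)
    ultimately show ?thesis using C0 insert.prems
      by (simp add: ennreal_mult[symmetric] C_def mult_ac)
  qed
  finally show ?case .
qed


definition PP :: "real^'d \<Rightarrow> real" where "PP x = (\<Prod>b\<in>Basis. x \<bullet> b)"

lemma Basis_vec_real: "(Basis :: (real^'d) set) = range (\<lambda>i. axis i 1)"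
  by (auto simp: Basis_vec_def)

lemma forall_Basis: "(\<forall>b\<in>(Basis::(real^'d) set). P (x \<bullet> b)) \<longleftrightarrow> (\<forall>i. P (x $ i))"
  by (auto simp: Basis_vec_real inner_axis)

lemma sum_Basis_vec: "(\<Sum>b\<in>(Basis::(real^'d) set). x \<bullet> b) = (\<Sum>i\<in>UNIV. x $ i)"
proof -
  have "inj (\<lambda>i::'d. axis i (1::real))" by (auto simp: inj_on_def axis_eq_axis)
  then show ?thesis by (simp add: Basis_vec_real sum.reindex inner_axis)
qed

lemma card_Basis_vec: "card (Basis :: (real^'d) set) = CARD('d)"
  using DIM_cart[where 'a=real and 'b='d] by simp

lemma dom_Basis: "dominated_by z x \<longleftrightarrow> (\<forall>b\<in>Basis. z \<bullet> b < x \<bullet> b)"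
  unfolding dominated_by_def by (auto simp: Basis_vec_real inner_axis)

lemma std_simplex_Basis: "std_simplex = {x::real^'d. (\<forall>b\<in>Basis. 0 \<le> x \<bullet> b) \<and> (\<Sum>b\<in>Basis. x \<bullet> b) \<le> 1}"
  unfolding std_simplex_def sum_Basis_vec forall_Basis[where P="\<lambda>t. 0 \<le> t"] by simp

lemma unit_cube_Basis: "unit_cube = {x::real^'d. \<forall>b\<in>Basis. 0 \<le> x \<bullet> b \<and> x \<bullet> b \<le> 1}"
  unfolding unit_cube_def forall_Basis[where P="\<lambda>t. 0 \<le> t \<and> t \<le> 1"] by simp

lemma oned_Ico:
  assumes a: "a \<ge> 0"
  shows "(\<integral>\<^sup>+t. ennreal (t ^ m) * indicator {0..<a} t \<partial>lborel) = ennreal (a ^ (m+1) / (m+1))"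
proof -
  have "AE t in lborel. ennreal (t ^ m) * indicator {0..<a} t = ennreal (t ^ m * (a - t) ^ 0) * indicator {0..a} t"
    using AE_lborel_singleton[of a] by eventually_elim (auto simp: indicator_def)
  then have "(\<integral>\<^sup>+t. ennreal (t ^ m) * indicator {0..<a} t \<partial>lborel) = (\<integral>\<^sup>+t. ennreal (t ^ m * (a - t) ^ 0) * indicator {0..a} t \<partial>lborel)"
    by (rule nn_integral_cong_AE)
  also have "\<dots> = ennreal (a ^ (m+1) / (m+1))"
    using beta_t[OF a, of m 0] by (simp add: fact_Suc del: of_nat_Suc)
  finally show ?thesis .
qed

lemma oned_Icc:
  assumes a: "a \<ge> 0"
  shows "(\<integral>\<^sup>+t. ennreal (t ^ m) * indicator {0..a} t \<partial>lborel) = ennreal (a ^ (m+1) / (m+1))"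
  using beta_t[OF a, of m 0] by (simp add: fact_Suc del: of_nat_Suc)

lemma box_int:
  fixes x :: "real^'d"
  assumes x: "\<And>b. b \<in> Basis \<Longrightarrow> 0 \<le> x \<bullet> b"
  shows "(\<integral>\<^sup>+y. ennreal (PP y ^ m) * indicator {z. \<forall>b\<in>Basis. 0 \<le> z \<bullet> b \<and> z \<bullet> b < x \<bullet> b} y \<partial>lborel)
       = ennreal (PP x ^ (m+1) / (m+1) ^ CARD('d))"
proof -
  have "(\<integral>\<^sup>+y. ennreal (PP y ^ m) * indicator {z. \<forall>b\<in>Basis. 0 \<le> z \<bullet> b \<and> z \<bullet> b < x \<bullet> b} y \<partial>lborel)
      = (\<integral>\<^sup>+y. (\<Prod>b\<in>Basis. (\<lambda>b t. ennreal (t ^ m) * indicator {0..<x \<bullet> b} t) b (y \<bullet> b)) \<partial>lborel)"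
  proof (intro nn_integral_cong)
    fix y :: "real^'d"
    show "ennreal (PP y ^ m) * indicator {z. \<forall>b\<in>Basis. 0 \<le> z \<bullet> b \<and> z \<bullet> b < x \<bullet> b} y
        = (\<Prod>b\<in>Basis. (\<lambda>b t. ennreal (t ^ m) * indicator {0..<x \<bullet> b} t) b (y \<bullet> b))"
    proof (cases "\<forall>b\<in>Basis. 0 \<le> y \<bullet> b \<and> y \<bullet> b < x \<bullet> b")
      case True
      then show ?thesis
        by (simp add: PP_def prod.distrib indicator_def prod_ennreal prod_power_distrib ennreal_power)
    next
      case False
      then obtain b where "b \<in> Basis" "\<not> (0 \<le> y \<bullet> b \<and> y \<bullet> b < x \<bullet> b)" by blast
      then show ?thesis
        by (auto simp: indicator_def intro!: prod_zero[symmetric] bexI[of _ b])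
    qed
  qed
  also have "\<dots> = (\<Prod>b\<in>Basis. \<integral>\<^sup>+t. ennreal (t ^ m) * indicator {0..<x \<bullet> b} t \<partial>lborel)"
    by (rule nn_integral_lborel_prod) auto
  also have "\<dots> = (\<Prod>b\<in>Basis. ennreal ((x \<bullet> b) ^ (m+1) / (m+1)))"
    using x by (intro prod.cong refl oned_Ico) auto
  also have "\<dots> = ennreal (PP x ^ (m+1) / (m+1) ^ CARD('d))"
    using x by (subst prod_ennreal) (auto simp: PP_def prod_dividef prod_power_distrib card_Basis_vec prod.distrib)
  finally show ?thesis .
qed

lemma cube_int:
  "(\<integral>\<^sup>+y. ennreal (PP y ^ m) * indicator (unit_cube :: (real^'d) set) y \<partial>lborel)
       = ennreal (1 / (1 + real m) ^ CARD('d))"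
proof -
  have "(\<integral>\<^sup>+y. ennreal (PP y ^ m) * indicator (unit_cube :: (real^'d) set) y \<partial>lborel)
      = (\<integral>\<^sup>+(y::real^'d). (\<Prod>b\<in>Basis. (\<lambda>b t. ennreal (t ^ m) * indicator {0..1} t) b (y \<bullet> b)) \<partial>lborel)"
  proof (intro nn_integral_cong)
    fix y :: "real^'d"
    show "ennreal (PP y ^ m) * indicator unit_cube y
        = (\<Prod>b\<in>Basis. (\<lambda>b t. ennreal (t ^ m) * indicator {0..1} t) b (y \<bullet> b))"
    proof (cases "\<forall>b\<in>Basis. 0 \<le> y \<bullet> b \<and> y \<bullet> b \<le> 1")
      case True
      then show ?thesis
        by (simp add: unit_cube_Basis PP_def prod.distrib indicator_def prod_ennreal prod_power_distrib ennreal_power)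
    next
      case False
      then obtain b where "b \<in> Basis" "\<not> (0 \<le> y \<bullet> b \<and> y \<bullet> b \<le> 1)" by blast
      then show ?thesis
        by (auto simp: unit_cube_Basis indicator_def intro!: prod_zero[symmetric] bexI[of _ b])
    qed
  qed
  also have "\<dots> = (\<Prod>b\<in>(Basis::(real^'d) set). \<integral>\<^sup>+t. ennreal (t ^ m) * indicator {0..1} t \<partial>lborel)"
    by (rule nn_integral_lborel_prod) auto
  also have "\<dots> = (\<Prod>b\<in>(Basis::(real^'d) set). ennreal (1 / (m+1)))"
    by (intro prod.cong refl) (simp add: oned_Icc)
  also have "\<dots> = ennreal (1 / (1 + real m) ^ CARD('d))"
    by (subst prod_ennreal) (auto simp: card_Basis_vec power_one_over)
  finally show ?thesis .
qed


lemma sum_T_inner: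
  fixes f :: "'a::euclidean_space \<Rightarrow> real"
  assumes b: "b \<in> Basis"
  shows "(\<Sum>b'\<in>Basis. f b' *\<^sub>R b') \<bullet> b = f b"
proof -
  have "(\<Sum>b'\<in>Basis. f b' *\<^sub>R b') \<bullet> b = (\<Sum>b'\<in>Basis. f b' * (b' \<bullet> b))"
    by (simp add: inner_sum_left)
  also have "\<dots> = (\<Sum>b'\<in>Basis. if b' = b then f b else 0)"
    using b by (intro sum.cong refl) (auto simp: inner_Basis)
  also have "\<dots> = f b" using b by simp
  finally show ?thesis .
qed

lemma simplex_int:
  "(\<integral>\<^sup>+y. ennreal (PP y ^ m) * indicator (std_simplex :: (real^'d) set) y \<partial>lborel)
     = ennreal (fact m ^ CARD('d) / fact (CARD('d) * (m+1)))"
proof -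
  let ?g = "\<lambda>y::real^'d. ennreal (PP y ^ m) * indicator std_simplex y"
  let ?T = "\<lambda>f. \<Sum>b\<in>(Basis::(real^'d) set). f b *\<^sub>R b"
  have L: "(lborel :: (real^'d) measure) = distr (\<Pi>\<^sub>M b\<in>Basis. lborel) borel ?T"
    by (rule lborel_eq)
  have Tm: "?T \<in> measurable (\<Pi>\<^sub>M b\<in>Basis. lborel) borel" by measurable
  have Ss: "std_simplex \<in> sets (borel :: (real^'d) measure)"
    unfolding std_simplex_Basis by measurable
  have gm: "?g \<in> borel_measurable borel" unfolding PP_def using Ss by measurable
  have "integral\<^sup>N lborel ?g = integral\<^sup>N (distr (\<Pi>\<^sub>M b\<in>Basis. lborel) borel ?T) ?g"
    by (rule arg_cong[where f="\<lambda>M. integral\<^sup>N M ?g", OF L])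
  also have "\<dots> = (\<integral>\<^sup>+f. ?g (?T f) \<partial>(\<Pi>\<^sub>M b\<in>Basis. lborel))"
  proof (rule nn_integral_distr[OF Tm])
    show "?g \<in> borel_measurable (distr (\<Pi>\<^sub>M b\<in>Basis. lborel) borel ?T)"
      using gm by (subst measurable_cong_sets[OF sets_distr refl])
  qed
  also have "\<dots> = (\<integral>\<^sup>+f. (if (\<forall>i\<in>Basis. 0 \<le> f i) \<and> sum f Basis \<le> 1 then ennreal (\<Prod>i\<in>Basis. f i ^ m) else 0) \<partial>(\<Pi>\<^sub>M b\<in>(Basis::(real^'d) set). lborel))"
  proof (intro nn_integral_cong)
    fix f :: "real^'d \<Rightarrow> real"
    have i: "?T f \<bullet> b = f b" if "b \<in> Basis" for b using sum_T_inner[OF that] .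
    have pp: "PP (?T f) ^ m = (\<Prod>i\<in>Basis. f i ^ m)"
      unfolding PP_def by (simp add: i prod_power_distrib)
    have s: "?T f \<in> std_simplex \<longleftrightarrow> (\<forall>i\<in>Basis. 0 \<le> f i) \<and> sum f Basis \<le> 1"
      unfolding std_simplex_Basis by (simp add: i)
    show "?g (?T f) = (if (\<forall>i\<in>Basis. 0 \<le> f i) \<and> sum f Basis \<le> 1 then ennreal (\<Prod>i\<in>Basis. f i ^ m) else 0)"
      using s pp by (simp add: indicator_def)
  qed
  also have "\<dots> = ennreal (1 ^ (card (Basis::(real^'d) set) * (m+1)) * fact m ^ card (Basis::(real^'d) set) / fact (card (Basis::(real^'d) set) * (m+1)))"
    by (rule dirichlet_aux) auto
  finally show ?thesis by (simp add: card_Basis_vec)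
qed

lemma harm_sq:
  "(gen_harm d n)\<^sup>2 = gen_harm (2*d) n + 2 * (\<Sum>k=1..n. 1 / real k ^ d * gen_harm d (k - 1))"
proof (induction n)
  case 0 then show ?case by (simp add: gen_harm_def)
next
  case (Suc n)
  have h: "gen_harm a (Suc n) = gen_harm a n + 1 / real (Suc n) ^ a" for a
    by (simp add: gen_harm_def)
  have "(1 / real (Suc n) ^ d)\<^sup>2 = 1 / real (Suc n) ^ (2 * d)"
    by (simp add: power_mult power2_eq_square power_divide mult.commute[of 2 d] power_mult[symmetric])
  then show ?case using Suc
    by (simp add: h power2_eq_square algebra_simps)
qed

lemma sum_from2:
  fixes f :: "nat \<Rightarrow> real"
  assumes "f 1 = 0"
  shows "(\<Sum>k=2..n. f k) = (\<Sum>k=1..n. f k)"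
proof (cases n)
  case 0 then show ?thesis by simp
next
  case (Suc m)
  then have "{1..n} = insert 1 {2..n}" by auto
  then show ?thesis using assms by simp
qed


definition HB :: "real^'d \<Rightarrow> (real^'d) set" where
  "HB x = {z. \<forall>b\<in>Basis. 0 \<le> z \<bullet> b \<and> z \<bullet> b < x \<bullet> b}"

lemma HB_sets: "HB x \<in> sets (borel :: (real^'d) measure)"
  unfolding HB_def by measurable

lemma PP_nonneg: "(\<And>b. b \<in> Basis \<Longrightarrow> 0 \<le> x \<bullet> b) \<Longrightarrow> 0 \<le> PP x"
  unfolding PP_def by (rule prod_nonneg) auto

lemma PP_meas[measurable]: "PP \<in> borel_measurable (borel :: (real^'d) measure)"
  unfolding PP_def by measurable

locale unif =
  fixes S :: "(real^'d) set" and v :: real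
  assumes S_sets[measurable]: "S \<in> sets borel" and vol: "emeasure lborel S = ennreal v" and vpos: "0 < v"
    and orth: "\<And>x b. x \<in> S \<Longrightarrow> b \<in> Basis \<Longrightarrow> 0 \<le> x \<bullet> b"
    and down: "\<And>x y. x \<in> S \<Longrightarrow> (\<And>b. b \<in> Basis \<Longrightarrow> 0 \<le> y \<bullet> b \<and> y \<bullet> b \<le> x \<bullet> b) \<Longrightarrow> y \<in> S"
begin

abbreviation U :: "(real^'d) measure" where "U \<equiv> uniform_measure lborel S"

lemma recs_U: "recs U"
proof (intro recs.intro recs_axioms.intro)
  show "prob_space U"
    by (rule prob_space_uniform_measure) (use vol vpos in auto)
  show "sets U = sets borel" by simp
qed

sublocale R: recs U by (rule recs_U)

lemma mU: "measurable U N = measurable lborel N"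
  by (rule measurable_cong_sets) simp_all

lemma S_dom: "x \<in> S \<Longrightarrow> S \<inter> {z. dominated_by z x} = HB x"
  unfolding HB_def dom_Basis
proof safe
  fix z b :: "real^'d" assume "x \<in> S" "z \<in> S" "b \<in> Basis"
  then show "0 \<le> z \<bullet> b" using orth by auto
next
  fix z assume x: "x \<in> S" and z: "\<forall>b\<in>Basis. 0 \<le> z \<bullet> b \<and> z \<bullet> b < x \<bullet> b"
  show "z \<in> S" by (rule down[OF x]) (use z in force)
qed auto

lemma emeasure_HB:
  assumes "\<And>b. b \<in> Basis \<Longrightarrow> 0 \<le> x \<bullet> b"
  shows "emeasure lborel (HB x) = ennreal (PP x)"
proof -
  have "emeasure lborel (HB x) = (\<integral>\<^sup>+y. ennreal (PP y ^ 0) * indicator (HB x) y \<partial>lborel)"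
    using HB_sets[of x] by simp
  also have "\<dots> = ennreal (PP x)"
    using box_int[of x 0] assms unfolding HB_def by simp
  finally show ?thesis .
qed

lemma F_eq:
  assumes x: "x \<in> S"
  shows "R.F x = ennreal (PP x / v)"
proof -
  have ds: "{z. dominated_by z x} \<in> sets lborel" using R.dom_set_sets by simp
  have "R.F x = emeasure lborel (S \<inter> {z. dominated_by z x}) / emeasure lborel S"
    unfolding R.F_def using ds by (subst emeasure_uniform_measure) auto
  also have "\<dots> = ennreal (PP x) / ennreal v"
    using x orth by (simp add: S_dom emeasure_HB vol)
  also have "\<dots> = ennreal (PP x / v)"
    using x orth vpos by (intro divide_ennreal PP_nonneg) auto
  finally show ?thesis .
qed

lemma F_lborel: "R.F \<in> borel_measurable lborel"
  using R.F_meas by (simp only: mU)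

lemma A_lemma:
  fixes g :: "nat \<Rightarrow> real"
  assumes G: "\<And>m. (\<integral>\<^sup>+x. ennreal (PP x ^ m) * indicator S x \<partial>lborel) = ennreal (g m)"
    and g0: "\<And>m. 0 \<le> g m" and k: "1 \<le> k"
  shows "(\<integral>\<^sup>+x. R.F x ^ (k-1) \<partial>U) = ennreal (g (k-1) / v ^ k)"
proof -
  have Fm: "(\<lambda>x. R.F x ^ (k-1)) \<in> borel_measurable lborel" using F_lborel by measurable
  have "(\<integral>\<^sup>+x. R.F x ^ (k-1) \<partial>U) = (\<integral>\<^sup>+x. R.F x ^ (k-1) * indicator S x \<partial>lborel) / emeasure lborel S"
    by (rule nn_integral_uniform_measure[OF Fm]) simp
  also have "(\<integral>\<^sup>+x. R.F x ^ (k-1) * indicator S x \<partial>lborel)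
      = (\<integral>\<^sup>+x. ennreal (1 / v ^ (k-1)) * (ennreal (PP x ^ (k-1)) * indicator S x) \<partial>lborel)"
  proof (intro nn_integral_cong)
    fix x :: "real^'d"
    show "R.F x ^ (k-1) * indicator S x = ennreal (1 / v ^ (k-1)) * (ennreal (PP x ^ (k-1)) * indicator S x)"
    proof (cases "x \<in> S")
      case True
      have p: "0 \<le> PP x" using True orth by (intro PP_nonneg) auto
      have "R.F x ^ (k-1) = ennreal ((PP x / v) ^ (k-1))"
        using True p vpos by (simp add: F_eq ennreal_power)
      also have "(PP x / v) ^ (k-1) = 1 / v ^ (k-1) * PP x ^ (k-1)"
        by (simp add: power_divide)
      also have "ennreal \<dots> = ennreal (1 / v ^ (k-1)) * ennreal (PP x ^ (k-1))"
        using p vpos by (intro ennreal_mult) auto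
      finally show ?thesis using True by (simp add: mult_ac)
    qed simp
  qed
  also have "\<dots> = ennreal (1 / v ^ (k-1)) * ennreal (g (k-1))"
  proof -
    have "(\<lambda>x. ennreal (PP x ^ (k-1)) * indicator S x) \<in> borel_measurable lborel" by measurable
    then show ?thesis by (subst nn_integral_cmult) (auto simp: G)
  qed
  also have "\<dots> / emeasure lborel S = ennreal (g (k-1) / v ^ k)"
  proof -
    have "ennreal (1 / v ^ (k-1)) * ennreal (g (k-1)) = ennreal (g (k-1) / v ^ (k-1))"
      using vpos g0 by (subst ennreal_mult[symmetric]) auto
    also have "\<dots> / ennreal v = ennreal (g (k-1) / v ^ (k-1) / v)"
      using vpos g0 by (intro divide_ennreal) auto
    also have "g (k-1) / v ^ (k-1) / v = g (k-1) / v ^ k"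
      using k by (cases k) auto
    finally show ?thesis by (simp add: vol)
  qed
  finally show ?thesis .
qed

lemma inner_lemma:
  assumes x: "x \<in> S" and j: "1 \<le> j"
  shows "(\<integral>\<^sup>+y. R.dind y x * R.F y ^ (j-1) \<partial>U) = ennreal ((PP x / v) ^ j / real j ^ CARD('d))"
proof -
  have dm: "(\<lambda>y. R.dind y x) \<in> borel_measurable lborel"
  proof -
    have "(\<lambda>z. (z,x)) \<in> measurable U (U \<Otimes>\<^sub>M U)" by (intro measurable_Pair) auto
    from measurable_compose[OF this R.dind_meas] show ?thesis by (simp add: mU)
  qed
  have Fm: "(\<lambda>y. R.dind y x * R.F y ^ (j-1)) \<in> borel_measurable lborel" using dm F_lborel by measurable
  have px: "\<And>b. b \<in> Basis \<Longrightarrow> 0 \<le> x \<bullet> b" using x orth by auto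
  have "(\<integral>\<^sup>+y. R.dind y x * R.F y ^ (j-1) \<partial>U) = (\<integral>\<^sup>+y. R.dind y x * R.F y ^ (j-1) * indicator S y \<partial>lborel) / emeasure lborel S"
    by (rule nn_integral_uniform_measure[OF Fm]) simp
  also have "(\<integral>\<^sup>+y. R.dind y x * R.F y ^ (j-1) * indicator S y \<partial>lborel)
      = (\<integral>\<^sup>+y. ennreal (1 / v ^ (j-1)) * (ennreal (PP y ^ (j-1)) * indicator (HB x) y) \<partial>lborel)"
  proof (intro nn_integral_cong)
    fix y :: "real^'d"
    show "R.dind y x * R.F y ^ (j-1) * indicator S y = ennreal (1 / v ^ (j-1)) * (ennreal (PP y ^ (j-1)) * indicator (HB x) y)"
    proof (cases "y \<in> HB x")
      case True
      then have yS: "y \<in> S" and dy: "dominated_by y x" using S_dom[OF x] by auto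
      have p: "0 \<le> PP y" using yS orth by (intro PP_nonneg) auto
      have "R.F y ^ (j-1) = ennreal ((PP y / v) ^ (j-1))"
        using yS p vpos by (simp add: F_eq ennreal_power)
      also have "(PP y / v) ^ (j-1) = 1 / v ^ (j-1) * PP y ^ (j-1)"
        by (simp add: power_divide)
      also have "ennreal \<dots> = ennreal (1 / v ^ (j-1)) * ennreal (PP y ^ (j-1))"
        using p vpos by (intro ennreal_mult) auto
      finally show ?thesis using True yS dy by (simp add: R.dind_def mult_ac)
    next
      case False
      then have "\<not> (y \<in> S \<and> dominated_by y x)" using S_dom[OF x] by auto
      then show ?thesis using False by (auto simp: R.dind_def)
    qed
  qed
  also have "\<dots> = ennreal (1 / v ^ (j-1)) * ennreal (PP x ^ j / real j ^ CARD('d))"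
  proof -
    have bi: "(\<integral>\<^sup>+y. ennreal (PP y ^ (j-1)) * indicator (HB x) y \<partial>lborel) = ennreal (PP x ^ j / real j ^ CARD('d))"
      using box_int[OF px, of "j-1"] j by (simp add: HB_def)
    have mm: "(\<lambda>y. ennreal (PP y ^ (j-1)) * indicator (HB x) y) \<in> borel_measurable lborel"
      using HB_sets[of x] by measurable
    show ?thesis by (subst nn_integral_cmult[OF mm], subst bi, rule refl)
  qed
  also have "\<dots> / emeasure lborel S = ennreal ((PP x / v) ^ j / real j ^ CARD('d))"
  proof -
    have p: "0 \<le> PP x" using px by (rule PP_nonneg)
    have "ennreal (1 / v ^ (j-1)) * ennreal (PP x ^ j / real j ^ CARD('d)) = ennreal (1 / v ^ (j-1) * (PP x ^ j / real j ^ CARD('d)))"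
      using vpos p by (subst ennreal_mult[symmetric]) auto
    also have "\<dots> / ennreal v = ennreal (1 / v ^ (j-1) * (PP x ^ j / real j ^ CARD('d)) / v)"
      using vpos p by (intro divide_ennreal) auto
    also have "1 / v ^ (j-1) * (PP x ^ j / real j ^ CARD('d)) / v = (PP x / v) ^ j / real j ^ CARD('d)"
      using j by (cases j) (auto simp: power_divide)
    finally show ?thesis by (simp add: vol)
  qed
  finally show ?thesis .
qed

lemma B_lemma:
  fixes g :: "nat \<Rightarrow> real"
  assumes G: "\<And>m. (\<integral>\<^sup>+x. ennreal (PP x ^ m) * indicator S x \<partial>lborel) = ennreal (g m)"
    and g0: "\<And>m. 0 \<le> g m" and jk: "1 \<le> j" "j < k"
  shows "(\<integral>\<^sup>+x. R.F x ^ (k-1-j) * (\<integral>\<^sup>+y. R.dind y x * R.F y ^ (j-1) \<partial>U) \<partial>U)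
       = ennreal (g (k-1) / v ^ k / real j ^ CARD('d))"
proof -
  have AE: "AE x in U. x \<in> S" by (rule AE_uniform_measureI) auto
  have "(\<integral>\<^sup>+x. R.F x ^ (k-1-j) * (\<integral>\<^sup>+y. R.dind y x * R.F y ^ (j-1) \<partial>U) \<partial>U)
      = (\<integral>\<^sup>+x. R.F x ^ (k-1) * ennreal (1 / real j ^ CARD('d)) \<partial>U)"
  proof (rule nn_integral_cong_AE)
    show "AE x in U. R.F x ^ (k-1-j) * (\<integral>\<^sup>+y. R.dind y x * R.F y ^ (j-1) \<partial>U) = R.F x ^ (k-1) * ennreal (1 / real j ^ CARD('d))"
      using AE
    proof eventually_elim
      case (elim x)
      have p: "0 \<le> PP x / v" using elim orth vpos by (intro divide_nonneg_pos PP_nonneg) auto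
      have "R.F x ^ (k-1-j) * (\<integral>\<^sup>+y. R.dind y x * R.F y ^ (j-1) \<partial>U)
          = ennreal ((PP x / v) ^ (k-1-j)) * ennreal ((PP x / v) ^ j / real j ^ CARD('d))"
        by (subst inner_lemma[OF elim jk(1)], simp add: F_eq[OF elim] ennreal_power p)
      also have "\<dots> = ennreal ((PP x / v) ^ (k-1-j) * ((PP x / v) ^ j / real j ^ CARD('d)))"
        using p by (subst ennreal_mult) auto
      also have "(PP x / v) ^ (k-1-j) * ((PP x / v) ^ j / real j ^ CARD('d)) = (PP x / v) ^ (k-1) * (1 / real j ^ CARD('d))"
      proof -
        have "k - 1 = (k-1-j) + j" using jk by simp
        then show ?thesis by (metis (no_types) power_add times_divide_eq_right mult_1_right)
      qed
      also have "ennreal \<dots> = ennreal ((PP x / v) ^ (k-1)) * ennreal (1 / real j ^ CARD('d))"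
        using p by (subst ennreal_mult) auto
      finally show ?case using elim p by (simp add: F_eq ennreal_power)
    qed
  qed
  also have "\<dots> = (\<integral>\<^sup>+x. R.F x ^ (k-1) \<partial>U) * ennreal (1 / real j ^ CARD('d))"
    using R.F_meas by (subst nn_integral_multc) auto
  also have "\<dots> = ennreal (g (k-1) / v ^ k) * ennreal (1 / real j ^ CARD('d))"
  proof -
    have k1: "1 \<le> k" using jk by simp
    show ?thesis by (subst A_lemma[OF G g0 k1]) (rule refl)
  qed
  also have "\<dots> = ennreal (g (k-1) / v ^ k / real j ^ CARD('d))"
    using g0 vpos by (subst ennreal_mult[symmetric]) auto
  finally show ?thesis .
qed

lemma final_unif:
  fixes g :: "nat \<Rightarrow> real"
  assumes G: "\<And>m. (\<integral>\<^sup>+x. ennreal (PP x ^ m) * indicator S x \<partial>lborel) = ennreal (g m)"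
    and g0: "\<And>m. 0 \<le> g m"
  shows "rec_mean (iid_uniform n S) n = (\<Sum>k=1..n. g (k-1) / v ^ k) \<and>
         rec_var (iid_uniform n S) n = 2 * (\<Sum>k=2..n. g (k-1) / v ^ k * gen_harm CARD('d) (k - 1))
            + (\<Sum>k=1..n. g (k-1) / v ^ k) - (\<Sum>k=1..n. g (k-1) / v ^ k)\<^sup>2"
proof -
  have "iid_uniform n S = R.MM n" by (simp add: iid_uniform_def)
  moreover have "rec_mean (R.MM n) n = (\<Sum>k=1..n. g (k-1) / v ^ k) \<and>
         rec_var (R.MM n) n = 2 * (\<Sum>k=2..n. g (k-1) / v ^ k * gen_harm CARD('d) (k - 1))
            + (\<Sum>k=1..n. g (k-1) / v ^ k) - (\<Sum>k=1..n. g (k-1) / v ^ k)\<^sup>2"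
  proof (rule R.final_abstract)
    show "\<And>k. 1 \<le> k \<Longrightarrow> (\<integral>\<^sup>+x. R.F x ^ (k-1) \<partial>U) = ennreal (g (k-1) / v ^ k)"
      by (rule A_lemma[OF G g0])
    show "\<And>k. 1 \<le> k \<Longrightarrow> 0 \<le> g (k-1) / v ^ k" using g0 vpos by simp
    show "\<And>j k. 1 \<le> j \<Longrightarrow> j < k \<Longrightarrow> (\<integral>\<^sup>+x. R.F x ^ (k-1-j) * (\<integral>\<^sup>+y. R.dind y x * R.F y ^ (j-1) \<partial>U) \<partial>U)
        = ennreal (g (k-1) / v ^ k / real j ^ CARD('d))"
      by (rule B_lemma[OF G g0])
  qed
  ultimately show ?thesis by simp
qed

end


theorem theorem5:
  fixes n :: nat
  defines "d \<equiv> CARD('d::finite)"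
  defines "a \<equiv> (\<lambda>k::nat. fact d ^ k * Gamma (real k) ^ d / Gamma (real (d * k) + 1) :: real)"
  shows "rec_mean (iid_uniform n (std_simplex :: (real^'d) set)) n = (\<Sum>k=1..n. a k)
     \<and> rec_var (iid_uniform n (std_simplex :: (real^'d) set)) n =
         2 * (\<Sum>k=2..n. a k * gen_harm d (k - 1)) + (\<Sum>k=1..n. a k) - (\<Sum>k=1..n. a k)\<^sup>2
     \<and> rec_mean (iid_uniform n (unit_cube :: (real^'d) set)) n = gen_harm d n
     \<and> rec_var (iid_uniform n (unit_cube :: (real^'d) set)) n = gen_harm d n - gen_harm (2 * d) n"
proof -
  have SXs: "(std_simplex :: (real^'d) set) \<in> sets borel"
    unfolding std_simplex_Basis by measurable
  have CUs: "(unit_cube :: (real^'d) set) \<in> sets borel"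
    unfolding unit_cube_Basis by measurable
  interpret SX: unif "std_simplex :: (real^'d) set" "1 / fact CARD('d)"
  proof
    show "(std_simplex :: (real^'d) set) \<in> sets borel" by (rule SXs)
    have "emeasure lborel (std_simplex :: (real^'d) set) = (\<integral>\<^sup>+y. ennreal (PP y ^ 0) * indicator (std_simplex :: (real^'d) set) y \<partial>lborel)"
      using SXs by simp
    also have "\<dots> = ennreal (1 / fact CARD('d))" using simplex_int[of 0, where 'd='d] by simp
    finally show "emeasure lborel (std_simplex :: (real^'d) set) = ennreal (1 / fact CARD('d))" .
    show "0 < 1 / (fact CARD('d) :: real)" by simp
    show "\<And>x b. x \<in> (std_simplex :: (real^'d) set) \<Longrightarrow> b \<in> Basis \<Longrightarrow> 0 \<le> x \<bullet> (b::real^'d)"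
      unfolding std_simplex_Basis by auto
    show "y \<in> std_simplex" if "x \<in> std_simplex" "\<And>b. b \<in> Basis \<Longrightarrow> 0 \<le> y \<bullet> b \<and> y \<bullet> b \<le> x \<bullet> b" for x y :: "real^'d"
    proof -
      have "(\<Sum>b\<in>Basis. y \<bullet> b) \<le> (\<Sum>b\<in>Basis. x \<bullet> b)" using that(2) by (intro sum_mono) auto
      then show ?thesis using that unfolding std_simplex_Basis by auto
    qed
  qed
  interpret CU: unif "unit_cube :: (real^'d) set" 1
  proof
    show "(unit_cube :: (real^'d) set) \<in> sets borel" by (rule CUs)
    have "emeasure lborel (unit_cube :: (real^'d) set) = (\<integral>\<^sup>+y. ennreal (PP y ^ 0) * indicator (unit_cube :: (real^'d) set) y \<partial>lborel)"
      using CUs by simp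
    also have "\<dots> = ennreal 1" using cube_int[of 0, where 'd='d] by simp
    finally show "emeasure lborel (unit_cube :: (real^'d) set) = ennreal 1" .
    show "0 < (1::real)" by simp
    show "\<And>x b. x \<in> (unit_cube :: (real^'d) set) \<Longrightarrow> b \<in> Basis \<Longrightarrow> 0 \<le> x \<bullet> (b::real^'d)"
      unfolding unit_cube_Basis by auto
    show "y \<in> unit_cube" if "x \<in> unit_cube" "\<And>b. b \<in> Basis \<Longrightarrow> 0 \<le> y \<bullet> b \<and> y \<bullet> b \<le> x \<bullet> b" for x y :: "real^'d"
      using that unfolding unit_cube_Basis by force
  qed
  define gs where "gs = (\<lambda>m::nat. fact m ^ CARD('d) / fact (CARD('d) * (m+1)) :: real)"
  define gc where "gc = (\<lambda>m::nat. 1 / (1 + real m) ^ CARD('d) :: real)"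
  have RS: "rec_mean (iid_uniform n (std_simplex :: (real^'d) set)) n = (\<Sum>k=1..n. gs (k-1) / (1 / fact CARD('d)) ^ k) \<and>
         rec_var (iid_uniform n (std_simplex :: (real^'d) set)) n = 2 * (\<Sum>k=2..n. gs (k-1) / (1 / fact CARD('d)) ^ k * gen_harm CARD('d) (k - 1))
            + (\<Sum>k=1..n. gs (k-1) / (1 / fact CARD('d)) ^ k) - (\<Sum>k=1..n. gs (k-1) / (1 / fact CARD('d)) ^ k)\<^sup>2"
    by (rule SX.final_unif) (simp_all add: gs_def simplex_int)
  have RC: "rec_mean (iid_uniform n (unit_cube :: (real^'d) set)) n = (\<Sum>k=1..n. gc (k-1) / 1 ^ k) \<and>
         rec_var (iid_uniform n (unit_cube :: (real^'d) set)) n = 2 * (\<Sum>k=2..n. gc (k-1) / 1 ^ k * gen_harm CARD('d) (k - 1))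
            + (\<Sum>k=1..n. gc (k-1) / 1 ^ k) - (\<Sum>k=1..n. gc (k-1) / 1 ^ k)\<^sup>2"
    by (rule CU.final_unif) (simp_all add: gc_def cube_int)
  have as: "gs (k-1) / (1 / fact CARD('d)) ^ k = a k" if k: "1 \<le> k" for k
  proof -
    have g1: "Gamma (real k) = fact (k-1)"
      using Gamma_fact[of "k-1", where 'a=real] k by (simp add: of_nat_diff)
    have g2: "Gamma (real (d * k) + 1) = fact (d * k)"
      using Gamma_fact[of "d*k", where 'a=real] by (simp add: add.commute)
    have g3: "Gamma (1 + real k * real CARD('d)) = fact (k * CARD('d))"
      using Gamma_fact[of "k * CARD('d)", where 'a=real] by simp
    have "k - 1 + 1 = k" using k by simp
    then show ?thesis unfolding a_def gs_def g1 g2 d_def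
      by (simp add: power_one_over field_simps g3)
  qed
  have ac: "gc (k-1) / 1 ^ k = 1 / real k ^ d" if k: "1 \<le> k" for k
    using k by (simp add: gc_def d_def of_nat_diff)
  have sa1: "(\<Sum>k=1..n. gs (k-1) / (1 / fact CARD('d)) ^ k) = (\<Sum>k=1..n. a k)"
    by (intro sum.cong refl as) auto
  have sa2: "(\<Sum>k=2..n. gs (k-1) / (1 / fact CARD('d)) ^ k * gen_harm CARD('d) (k - 1)) = (\<Sum>k=2..n. a k * gen_harm d (k - 1))"
  proof (intro sum.cong refl)
    fix k assume "k \<in> {2..n}"
    then have k1: "1 \<le> k" by simp
    show "gs (k-1) / (1 / fact CARD('d)) ^ k * gen_harm CARD('d) (k - 1) = a k * gen_harm d (k - 1)"
      by (simp only: as[OF k1] d_def)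
  qed
  have sc1: "(\<Sum>k=1..n. gc (k-1) / 1 ^ k) = gen_harm d n"
    unfolding gen_harm_def by (intro sum.cong refl ac) auto
  have sc2: "(\<Sum>k=2..n. gc (k-1) / 1 ^ k * gen_harm CARD('d) (k - 1)) = (\<Sum>k=1..n. 1 / real k ^ d * gen_harm d (k - 1))"
  proof -
    have "(\<Sum>k=2..n. gc (k-1) / 1 ^ k * gen_harm CARD('d) (k - 1)) = (\<Sum>k=2..n. 1 / real k ^ d * gen_harm d (k - 1))"
    proof (intro sum.cong refl)
      fix k assume "k \<in> {2..n}"
      then have k1: "1 \<le> k" by simp
      show "gc (k-1) / 1 ^ k * gen_harm CARD('d) (k - 1) = 1 / real k ^ d * gen_harm d (k - 1)"
        by (simp only: ac[OF k1] d_def)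
    qed
    also have "\<dots> = (\<Sum>k=1..n. 1 / real k ^ d * gen_harm d (k - 1))"
      by (rule sum_from2) (simp add: gen_harm_def)
    finally show ?thesis .
  qed
  show ?thesis
    using RS RC sa1 sa2 sc1 sc2 harm_sq[of d n] by simp
qed


end
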